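(* Let $f:\mathbb{N}\to\mathbb{R}$ with $f(1)=1$, and assume there exist $A,c>0$ such that $|f(n)|\leq A c^n$ for all $n\geq2$. (i) If $c\in(0,1)$, then $$|f^{-1}(n)| \leq \frac{\Omega(n)\, A\, n^{\varsigma+e\ln c}}{2^{\varsigma}} \leq \frac{A\, n^{\varsigma+e\ln c}\ln n}{2^{\varsigma}\ln 2}, \quad n\geq2,$$ where $\varsigma>1$ is the unique root of $\zeta(s)=\frac{1}{A}+1$. (ii) If $c\in(0,1)$ and $A\leq1$, then $|f^{-1}(n)|\leq n^{\rho+e\ln c}$ for all $n\geq2$, where $\rho=1.72865\dots$ is the unique root $s>1$ of $\zeta(s)=2$. (iii) If $c>1$, then there exists $\widetilde{A}>0$ such that $$|f^{-1}(n)| \leq Ac^n + \frac{(\Omega(n)-1)\,A\, n^{\upsilon}}{2^{\upsilon}}\, c^{n/2} \leq \widetilde{A}\, c^n, \quad n\geq2,$$ where $\upsilon>1$ is the unique root of $\zeta(s)=\frac{1}{Ac^2}+1$.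
   Context: $f^{-1}$ denotes the Dirichlet inverse of $f$: the arithmetic function with $\sum_{d\mid n} f(n/d) f^{-1}(d)=\varepsilon(n)$ for all $n$, where $\varepsilon(1)=1$ and $\varepsilon(n)=0$ for $n\ge2$. $\Omega(n)$ is the number of prime factors of $n$ counted with multiplicity. $\zeta$ is the Riemann zeta function and $e$ is Euler's number. *)

theory Defs
  imports "HOL-Analysis.Analysis" "HOL-Computational_Algebra.Primes"
begin

text \<open>Dirichlet inverse of an arithmetic function f (defined on positive integers;
  the value at 0 is normalised to 0 so that the inverse is unique when f 1 is nonzero).\<close>
definition dirichlet_inverse :: "(nat \<Rightarrow> real) \<Rightarrow> nat \<Rightarrow> real" where
  "dirichlet_inverse f = (THE g. g 0 = 0 \<and>
     (\<forall>n>0. (\<Sum>d | d dvd n. f (n div d) * g d) = (if n = 1 then 1 else 0)))"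

definition bigOmega :: "nat \<Rightarrow> nat" where
  "bigOmega n = size (prime_factorization n)"

definition zeta :: "real \<Rightarrow> real" where
  "zeta s = (\<Sum>n. 1 / (real (Suc n)) powr s)"

end

theory Submission imports Defs "HOL-Real_Asymp.Real_Asymp" begin
lemma zeta_summable: "s > 1 \<Longrightarrow> summable (\<lambda>n. 1 / real (Suc n) powr s)"
proof -
  assume s: "s > 1"
  have "summable (\<lambda>n. real n powr (-s))" using summable_real_powr_iff[of "-s"] s by simp
  hence "summable (\<lambda>n. real (Suc n) powr (-s))" by (subst summable_Suc_iff)
  thus ?thesis by (simp add: powr_minus divide_inverse)
qed

lemma zeta_strict_mono:
  assumes "1 < s" "s < t" shows "zeta t < zeta s"
proof -
  have "0 < (\<Sum>n. 1 / real (Suc n) powr s - 1 / real (Suc n) powr t)"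
  proof (rule suminf_pos2[where i=1])
    show "summable (\<lambda>n. 1 / real (Suc n) powr s - 1 / real (Suc n) powr t)"
      using zeta_summable assms by (intro summable_diff) auto
    show "0 \<le> 1 / real (Suc n) powr s - 1 / real (Suc n) powr t" for n
      using assms by (auto intro!: divide_left_mono powr_mono)
    have "(2::real) powr s < 2 powr t" using assms by simp
    thus "0 < 1 / real (Suc 1) powr s - 1 / real (Suc 1) powr t"
      by (simp add: frac_less2)
  qed
  also have "\<dots> = zeta s - zeta t" unfolding zeta_def
    using zeta_summable assms by (subst suminf_diff) auto
  finally show ?thesis by simp
qed

lemma zeta_minus1: "s > 1 \<Longrightarrow> zeta s - 1 = (\<Sum>n. 1 / real (n+2) powr s)"
  unfolding zeta_def using suminf_split_head[OF zeta_summable, of s] by simp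

lemma summable2: "s > 1 \<Longrightarrow> summable (\<lambda>n. 1 / real (n+2) powr s)"
  using summable_ignore_initial_segment[OF zeta_summable, of s 1] by simp

lemma sum_le_zeta:
  assumes s: "s > 1" and S: "finite S" "\<forall>k\<in>S. k \<ge> 2"
  shows "(\<Sum>k\<in>S. 1 / real k powr s) \<le> zeta s - 1"
proof -
  have "(\<lambda>n. n + 2) ` ((\<lambda>k. k - 2) ` S) = (\<lambda>k. k) ` S" unfolding image_image
    by (rule image_cong) (use S(2) in auto)
  hence eq: "S = (\<lambda>n. n + 2) ` ((\<lambda>k. k - 2) ` S)" by simp
  have "(\<Sum>k\<in>S. 1 / real k powr s) = (\<Sum>n\<in>(\<lambda>k. k - 2) ` S. 1 / real (n+2) powr s)"
    by (subst eq, subst sum.reindex) (auto simp: inj_on_def)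
  also have "\<dots> \<le> (\<Sum>n. 1 / real (n+2) powr s)"
    by (rule sum_le_suminf[OF summable2[OF s]]) (use S in auto)
  finally show ?thesis using zeta_minus1[OF s] by simp
qed

lemma zeta_cont: "a > 1 \<Longrightarrow> continuous_on {a..} zeta"
proof -
  assume a: "a > 1"
  have "continuous_on {a..} (\<lambda>s. \<Sum>n. 1 / real (Suc n) powr s)"
  proof (rule uniform_limit_theorem[where F=sequentially])
    show "uniform_limit {a..} (\<lambda>N s. \<Sum>n<N. 1 / real (Suc n) powr s) (\<lambda>s. \<Sum>n. 1 / real (Suc n) powr s) sequentially"
    proof (rule Weierstrass_m_test[OF _ zeta_summable[OF a]])
      fix n and x :: real assume "x \<in> {a..}"
      thus "norm (1 / real (Suc n) powr x) \<le> 1 / real (Suc n) powr a"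
        by (auto intro!: divide_left_mono powr_mono)
    qed
    show "\<forall>\<^sub>F N in sequentially. continuous_on {a..} (\<lambda>s. \<Sum>n<N. 1 / real (Suc n) powr s)"
      by (intro always_eventually allI continuous_intros) auto
  qed auto
  thus ?thesis unfolding zeta_def .
qed

lemma zeta_big: "\<exists>s>1. zeta s > M"
proof -
  have "filterlim (harm :: nat \<Rightarrow> real) at_top sequentially" by (rule harm_at_top)
  then obtain N where N: "harm N > M" using filterlim_at_top_dense
    by (metis (no_types, lifting) eventually_at_top_linorder order_refl)
  have "((\<lambda>s. \<Sum>n<N. 1 / real (Suc n) powr s) \<longlongrightarrow> (\<Sum>n<N. 1 / real (Suc n) powr 1)) (at_right 1)"
    by (intro tendsto_intros) auto
  moreover have "(\<Sum>n<N. 1 / real (Suc n) powr 1) = harm N"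
    by (simp add: harm_altdef divide_inverse)
  ultimately have "eventually (\<lambda>s. (\<Sum>n<N. 1 / real (Suc n) powr s) > M) (at_right 1)"
    using N order_tendstoD(1) by fastforce
  then obtain b where b: "b > 1" "\<And>y. y > 1 \<Longrightarrow> y < b \<Longrightarrow> (\<Sum>n<N. 1 / real (Suc n) powr y) > M"
    unfolding eventually_at_right_field by blast
  define y where "y = (1 + b) / 2"
  have y: "y > 1" "y < b" using b by (auto simp: y_def)
  have "(\<Sum>n<N. 1 / real (Suc n) powr y) \<le> zeta y" unfolding zeta_def
    by (rule sum_le_suminf[OF zeta_summable[OF y(1)]]) auto
  thus ?thesis using b(2)[OF y] y by (intro exI[of _ y]) auto
qed

lemma zeta_small:
  assumes "t > 1" shows "\<exists>s>1. zeta s < t"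
proof -
  define Z where "Z = zeta 2 - 1"
  have Z: "Z \<ge> 0" unfolding Z_def using sum_le_zeta[of 2 "{}"] by simp
  have le: "zeta s - 1 \<le> 2 powr (2 - s) * Z" if s: "s \<ge> 2" for s
  proof -
    have "zeta s - 1 = (\<Sum>n. 1 / real (n+2) powr s)" using s zeta_minus1 by simp
    also have "\<dots> \<le> (\<Sum>n. 2 powr (2 - s) * (1 / real (n+2) powr 2))"
    proof (rule suminf_le)
      show "summable (\<lambda>n. 1 / real (n+2) powr s)" using s summable2 by simp
      show "summable (\<lambda>n. 2 powr (2 - s) * (1 / real (n+2) powr 2))"
        using summable2[of 2] by (intro summable_mult) auto
      fix n
      have "1 / real (n+2) powr s = real (n+2) powr (2 - s) * (1 / real (n+2) powr 2)"
        by (simp add: powr_diff divide_simps)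
      also have "\<dots> \<le> 2 powr (2 - s) * (1 / real (n+2) powr 2)"
        using s by (intro mult_right_mono powr_mono2') auto
      finally show "1 / real (n+2) powr s \<le> 2 powr (2 - s) * (1 / real (n+2) powr 2)" .
    qed
    also have "\<dots> = 2 powr (2 - s) * Z"
      using summable2[of 2] zeta_minus1[of 2] by (subst suminf_mult) (auto simp: Z_def)
    finally show ?thesis .
  qed
  have "((\<lambda>s. 2 powr (2 - s) * Z) \<longlongrightarrow> 0) at_top" by real_asymp
  hence "eventually (\<lambda>s. 2 powr (2 - s) * Z < t - 1) at_top"
    using assms order_tendstoD(2) by fastforce
  moreover have "eventually (\<lambda>s. s \<ge> (2::real)) at_top" by simp
  ultimately have "eventually (\<lambda>s. s \<ge> 2 \<and> 2 powr (2 - s) * Z < t - 1) at_top"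
    by eventually_elim auto
  then obtain N where "\<forall>s\<ge>N. s \<ge> 2 \<and> 2 powr (2 - s) * Z < t - 1"
    unfolding eventually_at_top_linorder by blast
  then obtain s where "s \<ge> 2" "2 powr (2 - s) * Z < t - 1" by blast
  thus ?thesis using le[of s] by (intro exI[of _ s]) auto
qed

lemma zeta_root: assumes "t > 1" shows "\<exists>!s. s > 1 \<and> zeta s = t"
proof -
  obtain a where a: "a > 1" "zeta a > t" using zeta_big by blast
  obtain b where b: "b > 1" "zeta b < t" using zeta_small[OF assms] by blast
  have ab: "a \<le> b"
  proof (rule ccontr)
    assume "\<not> a \<le> b" thus False using zeta_strict_mono[of b a] a b by auto
  qed
  have "continuous_on {a..b} zeta" using zeta_cont[OF a(1)] by (rule continuous_on_subset) auto
  then obtain x where "a \<le> x" "x \<le> b" "zeta x = t" using IVT2'[of zeta b t a] a b ab by auto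
  hence ex: "x > 1 \<and> zeta x = t" using a by auto
  show ?thesis
  proof (rule ex1I[of _ x])
    show "x > 1 \<and> zeta x = t" by fact
    fix y assume y: "y > 1 \<and> zeta y = t"
    show "y = x"
    proof (rule ccontr)
      assume "y \<noteq> x"
      hence "y < x \<or> x < y" by auto
      thus False using zeta_strict_mono[of y x] zeta_strict_mono[of x y] ex y by auto
    qed
  qed
qed

function dinv :: "(nat \<Rightarrow> real) \<Rightarrow> nat \<Rightarrow> real" where
  "dinv f n = (if n = 0 then 0 else if n = 1 then 1 else
     - (\<Sum>d\<in>{d. d dvd n \<and> d < n}. f (n div d) * dinv f d))"
  by auto
termination by (relation "Wellfounded.measure snd") auto

declare dinv.simps[simp del]

lemma dinv_0: "dinv f 0 = 0" by (subst dinv.simps) simp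
lemma dinv_1: "dinv f 1 = 1" by (subst dinv.simps) simp
lemma dinv_Suc0: "dinv f (Suc 0) = 1" by (subst dinv.simps) simp
lemma dinv_rec: "n \<ge> 2 \<Longrightarrow> dinv f n = - (\<Sum>d\<in>{d. d dvd n \<and> d < n}. f (n div d) * dinv f d)"
  by (subst dinv.simps) simp

lemma fin_divs: "finite {d. d dvd n \<and> d < (n::nat)}"
  by (rule finite_subset[of _ "{..<n}"]) auto

lemma dvd_set: "n > 0 \<Longrightarrow> {d. d dvd n} = insert n {d. d dvd n \<and> d < (n::nat)}"
  using dvd_imp_le by fastforce

lemma dinv_prop:
  assumes f1: "f 1 = 1" and n: "n > 0"
  shows "(\<Sum>d | d dvd n. f (n div d) * dinv f d) = (if n = 1 then 1 else 0)"
proof (cases "n = 1")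
  case True
  have "{d. d dvd (1::nat)} = {1}" by auto
  thus ?thesis using True f1 by (simp add: dinv_Suc0)
next
  case False
  hence n2: "n \<ge> 2" using n by auto
  have "(\<Sum>d | d dvd n. f (n div d) * dinv f d) = f 1 * dinv f n + (\<Sum>d\<in>{d. d dvd n \<and> d < n}. f (n div d) * dinv f d)"
    using n by (subst dvd_set) (auto simp: fin_divs)
  also have "\<dots> = 0" using f1 dinv_rec[OF n2, of f] by simp
  finally show ?thesis using False by simp
qed

lemma dinv_unique:
  assumes f1: "f 1 = 1" and g0: "g 0 = 0"
    and gp: "\<forall>n>0. (\<Sum>d | d dvd n. f (n div d) * g d) = (if n = 1 then 1 else 0)"
  shows "g n = dinv f n"
proof (induction n rule: less_induct)
  case (less n)
  consider "n = 0" | "n = 1" | "n \<ge> 2" by linarith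
  thus ?case
  proof cases
    case 1 thus ?thesis using g0 dinv_0 by simp
  next
    case 2
    have "{d. d dvd (1::nat)} = {1}" by auto
    thus ?thesis using gp[rule_format, of 1] 2 f1 dinv_1 by simp
  next
    case 3
    have "(\<Sum>d | d dvd n. f (n div d) * g d) = f 1 * g n + (\<Sum>d\<in>{d. d dvd n \<and> d < n}. f (n div d) * g d)"
      using 3 by (subst dvd_set) (auto simp: fin_divs)
    also have "(\<Sum>d\<in>{d. d dvd n \<and> d < n}. f (n div d) * g d) = (\<Sum>d\<in>{d. d dvd n \<and> d < n}. f (n div d) * dinv f d)"
      using less.IH by (intro sum.cong) auto
    finally have "g n = - (\<Sum>d\<in>{d. d dvd n \<and> d < n}. f (n div d) * dinv f d)"
      using gp[rule_format, of n] 3 f1 by simp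
    thus ?thesis using dinv_rec[OF 3] by simp
  qed
qed

lemma di_eq: assumes f1: "f 1 = 1" shows "dirichlet_inverse f = dinv f"
  unfolding dirichlet_inverse_def
proof (rule the_equality)
  show "dinv f 0 = 0 \<and> (\<forall>n>0. (\<Sum>d | d dvd n. f (n div d) * dinv f d) = (if n = 1 then 1 else 0))"
    using dinv_0 dinv_prop[of f, OF f1] by auto
  fix g assume "g 0 = 0 \<and> (\<forall>n>0. (\<Sum>d | d dvd n. f (n div d) * g d) = (if n = 1 then 1 else 0))"
  thus "g = dinv f" using dinv_unique[of f, OF f1] by blast
qed

definition Ep :: "nat \<Rightarrow> nat set" where "Ep n = {e. e dvd n \<and> 1 < e \<and> e < n}"

lemma Ep_finite: "finite (Ep n)" unfolding Ep_def by (rule finite_subset[of _ "{..<n}"]) auto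

lemma Ep_elem: assumes "e \<in> Ep n"
  shows "e \<ge> 2" "n div e \<ge> 2" "n div e < n" "e * (n div e) = n" "n div e \<in> Ep n" "n div (n div e) = e"
proof -
  from assms obtain k where k: "n = e * k" "1 < e" "e < n" unfolding Ep_def by auto
  have kpos: "k > 0" using k by (cases k) auto
  have ke: "n div e = k" using k by simp
  have "k \<ge> 2" using k kpos by (cases "k = 1") auto
  moreover have "k < n" using k kpos by simp
  ultimately show "e \<ge> 2" "n div e \<ge> 2" "n div e < n" "e * (n div e) = n" "n div e \<in> Ep n" "n div (n div e) = e"
    using k kpos ke unfolding Ep_def by auto
qed

lemma dinv_bound:
  assumes n: "n \<ge> 2"
  shows "\<bar>dinv f n\<bar> \<le> \<bar>f n\<bar> + (\<Sum>e\<in>Ep n. \<bar>f e\<bar> * \<bar>dinv f (n div e)\<bar>)"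
proof -
  have set: "{d. d dvd n \<and> d < n} = insert 1 (Ep n)" using n unfolding Ep_def by auto
  have "dinv f n = - (f n + (\<Sum>d\<in>Ep n. f (n div d) * dinv f d))"
    using n by (subst dinv_rec[OF n], subst set) (simp add: Ep_finite Ep_def dinv_Suc0)
  also have "(\<Sum>d\<in>Ep n. f (n div d) * dinv f d) = (\<Sum>e\<in>Ep n. f e * dinv f (n div e))"
    by (rule sum.reindex_bij_witness[of _ "\<lambda>e. n div e" "\<lambda>e. n div e"]) (auto dest: Ep_elem)
  finally have "\<bar>dinv f n\<bar> = \<bar>f n + (\<Sum>e\<in>Ep n. f e * dinv f (n div e))\<bar>" by simp
  also have "\<dots> \<le> \<bar>f n\<bar> + \<bar>\<Sum>e\<in>Ep n. f e * dinv f (n div e)\<bar>" by (rule abs_triangle_ineq)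
  also have "\<bar>\<Sum>e\<in>Ep n. f e * dinv f (n div e)\<bar> \<le> (\<Sum>e\<in>Ep n. \<bar>f e * dinv f (n div e)\<bar>)" by (rule sum_abs)
  finally show ?thesis by (simp add: abs_mult)
qed

lemma bigOmega_mult: "a > 0 \<Longrightarrow> b > 0 \<Longrightarrow> bigOmega (a * b) = bigOmega a + bigOmega b"
  unfolding bigOmega_def by (simp add: prime_factorization_mult)

lemma bigOmega_ge1: "(m::nat) \<ge> 2 \<Longrightarrow> bigOmega m \<ge> 1"
  unfolding bigOmega_def using prime_factorization_empty_iff[of m]
  by (cases "prime_factorization m") auto

lemma bigOmega_1: "bigOmega 1 = 0" unfolding bigOmega_def by simp
lemma bigOmega_Suc0: "bigOmega (Suc 0) = 0" unfolding bigOmega_def by simp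

lemma bigOmega_Ep: assumes "e \<in> Ep n" shows "real (bigOmega (n div e)) \<le> real (bigOmega n) - 1"
proof -
  note E = Ep_elem[OF assms]
  have "bigOmega n = bigOmega e + bigOmega (n div e)"
    using E bigOmega_mult[of e "n div e"] by simp
  moreover have "bigOmega e \<ge> 1" using E bigOmega_ge1 by simp
  ultimately show ?thesis by simp
qed

lemma two_pow_bigOmega: "n > 0 \<Longrightarrow> 2 ^ bigOmega n \<le> n"
proof (induction n rule: less_induct)
  case (less n)
  show ?case
  proof (cases "n = 1")
    case True thus ?thesis by (simp add: bigOmega_Suc0)
  next
    case False
    then obtain p where p: "prime p" "p dvd n" using prime_factor_nat by blast
    then obtain m where m: "n = p * m" by auto
    have p2: "p \<ge> 2" using p prime_ge_2_nat by blast
    have mpos: "m > 0" using m less.prems by (cases m) auto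
    have "m < n" using m p2 mpos by simp
    hence IH: "2 ^ bigOmega m \<le> m" using less.IH mpos by blast
    have "bigOmega p = 1" unfolding bigOmega_def using p by (simp add: prime_factorization_prime)
    hence "bigOmega n = 1 + bigOmega m" using m bigOmega_mult[of p m] p2 mpos by simp
    hence "2 ^ bigOmega n = 2 * 2 ^ bigOmega m" by simp
    also have "\<dots> \<le> 2 * m" using IH by simp
    also have "\<dots> \<le> p * m" using p2 by simp
    finally show ?thesis using m by simp
  qed
qed

lemma bigOmega_ln: "n > 0 \<Longrightarrow> real (bigOmega n) \<le> ln (real n) / ln 2"
proof -
  assume n: "n > 0"
  have "real (2 ^ bigOmega n) \<le> real n" using two_pow_bigOmega[OF n] by linarith
  hence "(2::real) ^ bigOmega n \<le> real n" by simp
  hence "ln ((2::real) ^ bigOmega n) \<le> ln (real n)" using n by (subst ln_le_cancel_iff) auto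
  hence "real (bigOmega n) * ln 2 \<le> ln (real n)" by (simp add: ln_realpow)
  thus ?thesis by (simp add: field_simps)
qed

lemma c_pow_le:
  assumes c: "0 < c" "c < 1" and k: "k \<ge> 1"
  shows "c ^ k \<le> real k powr (exp 1 * ln c)"
proof -
  have "ln (real k / exp 1) \<le> real k / exp 1 - 1" using k by (intro ln_le_minus_one) auto
  hence "ln (real k) - 1 \<le> real k / exp 1 - 1" using k by (simp add: ln_div)
  hence "exp 1 * ln (real k) \<le> real k" by (simp add: field_simps)
  moreover have "ln c \<le> 0" using c by simp
  ultimately have "real k * ln c \<le> exp 1 * ln (real k) * ln c"
    by (intro mult_right_mono_neg) auto
  hence "exp (real k * ln c) \<le> exp (exp 1 * ln c * ln (real k))" by (simp add: mult_ac)
  thus ?thesis using c k by (simp add: powr_def exp_of_nat_mult[symmetric] powr_realpow[symmetric])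
qed

lemma part1:
  fixes f :: "nat \<Rightarrow> real"
  assumes f1: "f 1 = 1" and A: "A > 0" and c: "0 < c" "c < 1"
    and bound: "\<forall>n\<ge>2. \<bar>f n\<bar> \<le> A * c ^ n"
    and s: "s > 1" "zeta s = 1 / A + 1"
  shows "n \<ge> 2 \<Longrightarrow> \<bar>dinv f n\<bar> \<le> real (bigOmega n) * A * real n powr (s + exp 1 * ln c) / 2 powr s"
proof (induction n rule: less_induct)
  case (less n)
  define L where "L = exp 1 * ln c"
  define Q where "Q = (real (bigOmega n) - 1) * A * A * real n powr (s + L) / 2 powr s"
  have Om: "real (bigOmega n) \<ge> 1" using bigOmega_ge1[OF less.prems] by simp
  have Q0: "Q \<ge> 0" unfolding Q_def using Om A by auto
  have fe: "\<bar>f e\<bar> \<le> A * real e powr L" if "e \<ge> 2" for e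
  proof -
    have "\<bar>f e\<bar> \<le> A * c ^ e" using bound that by auto
    also have "\<dots> \<le> A * real e powr L" unfolding L_def using c that A
      by (intro mult_left_mono c_pow_le) auto
    finally show ?thesis .
  qed
  have tm: "\<bar>f e\<bar> * \<bar>dinv f (n div e)\<bar> \<le> Q * (1 / real e powr s)" if e: "e \<in> Ep n" for e
  proof -
    note E = Ep_elem[OF e]
    define k where "k = n div e"
    have k: "k \<ge> 2" "k < n" "real n = real e * real k" using E unfolding k_def
      by (auto simp flip: of_nat_mult)
    have IH: "\<bar>dinv f k\<bar> \<le> real (bigOmega k) * A * real k powr (s + L) / 2 powr s"
      using less.IH[OF k(2) k(1)] unfolding L_def .
    have "\<bar>f e\<bar> * \<bar>dinv f k\<bar> \<le> (A * real e powr L) * (real (bigOmega k) * A * real k powr (s + L) / 2 powr s)"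
      using fe[OF E(1)] IH by (intro mult_mono) auto
    also have "\<dots> \<le> (A * real e powr L) * ((real (bigOmega n) - 1) * A * real k powr (s + L) / 2 powr s)"
      using bigOmega_Ep[OF e] A unfolding k_def
      by (intro mult_left_mono divide_right_mono mult_right_mono) auto
    also have "\<dots> = Q * (1 / real e powr s)"
    proof -
      have "real n powr (s + L) = real e powr s * real e powr L * (real k powr s * real k powr L)"
        using k E(1) by (simp add: powr_add powr_mult)
      moreover have "real k powr (s + L) = real k powr s * real k powr L" by (simp add: powr_add)
      ultimately show ?thesis using E(1) unfolding Q_def by (simp add: field_simps)
    qed
    finally show ?thesis unfolding k_def .
  qed
  have "\<bar>dinv f n\<bar> \<le> \<bar>f n\<bar> + (\<Sum>e\<in>Ep n. \<bar>f e\<bar> * \<bar>dinv f (n div e)\<bar>)"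
    by (rule dinv_bound[OF less.prems])
  also have "(\<Sum>e\<in>Ep n. \<bar>f e\<bar> * \<bar>dinv f (n div e)\<bar>) \<le> (\<Sum>e\<in>Ep n. Q * (1 / real e powr s))"
    by (intro sum_mono tm)
  also have "\<dots> = Q * (\<Sum>e\<in>Ep n. 1 / real e powr s)" by (simp add: sum_distrib_left)
  also have "\<dots> \<le> Q * (zeta s - 1)"
    using Q0 s Ep_finite by (intro mult_left_mono sum_le_zeta) (auto dest: Ep_elem)
  also have "Q * (zeta s - 1) = (real (bigOmega n) - 1) * A * real n powr (s + L) / 2 powr s"
    using A unfolding Q_def s(2) by (simp add: field_simps)
  also have "\<bar>f n\<bar> \<le> A * real n powr (s + L) / 2 powr s"
  proof -
    have "\<bar>f n\<bar> \<le> A * real n powr L" by (rule fe[OF less.prems])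
    also have "\<dots> \<le> A * real n powr L * (real n powr s / 2 powr s)"
    proof -
      have "2 powr s \<le> real n powr s" using less.prems s by (intro powr_mono2) auto
      hence "1 \<le> real n powr s / 2 powr s" by simp
      hence "A * real n powr L * 1 \<le> A * real n powr L * (real n powr s / 2 powr s)"
        using A by (intro mult_left_mono) auto
      thus ?thesis by simp
    qed
    also have "\<dots> = A * real n powr (s + L) / 2 powr s" by (simp add: powr_add)
    finally show ?thesis .
  qed
  finally show ?case unfolding L_def by (simp add: field_simps)
qed

lemma part2:
  fixes f :: "nat \<Rightarrow> real"
  assumes f1: "f 1 = 1" and A: "A > 0" "A \<le> 1" and c: "0 < c" "c < 1"
    and bound: "\<forall>n\<ge>2. \<bar>f n\<bar> \<le> A * c ^ n"
    and s: "s > 1" "zeta s = 2"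
  shows "n \<ge> 1 \<Longrightarrow> \<bar>dinv f n\<bar> \<le> real n powr (s + exp 1 * ln c)"
proof (induction n rule: less_induct)
  case (less n)
  define L where "L = exp 1 * ln c"
  show ?case
  proof (cases "n = 1")
    case True thus ?thesis by (simp add: dinv_Suc0)
  next
    case False
    hence n2: "n \<ge> 2" using less.prems by auto
    have fe: "\<bar>f e\<bar> \<le> real e powr L" if "e \<ge> 2" for e
    proof -
      have "\<bar>f e\<bar> \<le> A * c ^ e" using bound that by auto
      also have "\<dots> \<le> 1 * c ^ e" using A c by (intro mult_right_mono) auto
      also have "\<dots> \<le> real e powr L" unfolding L_def using c that
        by (simp add: c_pow_le)
      finally show ?thesis .
    qed
    define P where "P = real n powr (s + L)"
    have P0: "P \<ge> 0" unfolding P_def by simp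
    have tm: "\<bar>f e\<bar> * \<bar>dinv f (n div e)\<bar> \<le> P * (1 / real e powr s)" if e: "e \<in> Ep n" for e
    proof -
      note E = Ep_elem[OF e]
      define k where "k = n div e"
      have k: "k \<ge> 2" "k < n" "real n = real e * real k" using E unfolding k_def
        by (auto simp flip: of_nat_mult)
      have IH: "\<bar>dinv f k\<bar> \<le> real k powr (s + L)"
        using less.IH[OF k(2)] k(1) unfolding L_def by simp
      have "\<bar>f e\<bar> * \<bar>dinv f k\<bar> \<le> real e powr L * real k powr (s + L)"
        using fe[OF E(1)] IH by (intro mult_mono) auto
      also have "\<dots> = P * (1 / real e powr s)"
      proof -
        have "real n powr (s + L) = real e powr s * real e powr L * (real k powr s * real k powr L)"
          using k E(1) by (simp add: powr_add powr_mult)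
        moreover have "real k powr (s + L) = real k powr s * real k powr L" by (simp add: powr_add)
        ultimately show ?thesis using E(1) unfolding P_def by (simp add: field_simps)
      qed
      finally show ?thesis unfolding k_def .
    qed
    have fn: "\<bar>f n\<bar> \<le> P * (1 / real n powr s)"
    proof -
      have "\<bar>f n\<bar> \<le> real n powr L" by (rule fe[OF n2])
      also have "\<dots> = P * (1 / real n powr s)" unfolding P_def using n2
        by (simp add: powr_add field_simps)
      finally show ?thesis .
    qed
    have nE: "n \<notin> Ep n" unfolding Ep_def by auto
    have "\<bar>dinv f n\<bar> \<le> \<bar>f n\<bar> + (\<Sum>e\<in>Ep n. \<bar>f e\<bar> * \<bar>dinv f (n div e)\<bar>)"
      by (rule dinv_bound[OF n2])
    also have "\<dots> \<le> P * (1 / real n powr s) + (\<Sum>e\<in>Ep n. P * (1 / real e powr s))"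
      using fn tm by (intro add_mono sum_mono) auto
    also have "\<dots> = P * (\<Sum>e\<in>insert n (Ep n). 1 / real e powr s)"
      using nE Ep_finite by (simp add: sum_distrib_left distrib_left)
    also have "\<dots> \<le> P * (zeta s - 1)"
      using P0 s Ep_finite n2 by (intro mult_left_mono sum_le_zeta) (auto dest: Ep_elem)
    also have "\<dots> = P" using s by simp
    finally show ?thesis unfolding P_def L_def .
  qed
qed

lemma part3:
  fixes f :: "nat \<Rightarrow> real"
  assumes f1: "f 1 = 1" and A: "A > 0" and c: "c > 1"
    and bound: "\<forall>n\<ge>2. \<bar>f n\<bar> \<le> A * c ^ n"
    and s: "s > 1" "zeta s = 1 / (A * c\<^sup>2) + 1"
  shows "n \<ge> 2 \<Longrightarrow> \<bar>dinv f n\<bar> \<le> A * c ^ n + (real (bigOmega n) - 1) * A * real n powr s / 2 powr s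
                 * c powr (real n / 2)"
proof (induction n rule: less_induct)
  case (less n)
  define Q where "Q = A * A * c\<^sup>2 * (real (bigOmega n) - 1) * (real n powr s / 2 powr s) * c powr (real n / 2)"
  have Om: "real (bigOmega n) \<ge> 1" using bigOmega_ge1[OF less.prems] by simp
  have Q0: "Q \<ge> 0" unfolding Q_def using Om A by auto
  have cpow: "c ^ m = c powr real m" for m using c by (simp add: powr_realpow)
  have tm: "\<bar>f e\<bar> * \<bar>dinv f (n div e)\<bar> \<le> Q * (1 / real e powr s)" if e: "e \<in> Ep n" for e
  proof -
    note E = Ep_elem[OF e]
    define k where "k = n div e"
    have k: "k \<ge> 2" "k < n" "real n = real e * real k" using E unfolding k_def
      by (auto simp flip: of_nat_mult)
    have IH: "\<bar>dinv f k\<bar> \<le> A * c ^ k + (real (bigOmega k) - 1) * A * real k powr s / 2 powr s * c powr (real k / 2)"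
      using less.IH[OF k(2) k(1)] .
    define X where "X = real k powr s / 2 powr s"
    have X1: "X \<ge> 1" unfolding X_def using k s by (simp add: powr_mono2)
    have Omk: "real (bigOmega k) \<ge> 1" using bigOmega_ge1[OF k(1)] by simp
    have ck: "c powr (real k / 2) \<le> c ^ k" unfolding cpow using c by (intro powr_mono) auto
    have W: "\<bar>dinv f k\<bar> \<le> A * c ^ k * real (bigOmega k) * X"
    proof -
      have "\<bar>dinv f k\<bar> \<le> A * c ^ k + (real (bigOmega k) - 1) * A * X * c powr (real k / 2)"
        using IH unfolding X_def by simp
      also have "\<dots> \<le> A * c ^ k * X + (real (bigOmega k) - 1) * A * X * c ^ k"
        using A c X1 Omk ck by (intro add_mono mult_left_mono) auto
      also have "\<dots> = A * c ^ k * real (bigOmega k) * X" by (simp add: algebra_simps)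
      finally show ?thesis .
    qed
    have ek: "real e + real k \<le> 2 + real n / 2"
    proof -
      have "0 \<le> (real e - 2) * (real k - 2)" using E(1) k(1) by (intro mult_nonneg_nonneg) auto
      thus ?thesis using k(3) by (simp add: algebra_simps)
    qed
    have cek: "c ^ e * c ^ k \<le> c\<^sup>2 * c powr (real n / 2)"
    proof -
      have "c ^ e * c ^ k = c powr (real e + real k)" unfolding cpow by (simp add: powr_add)
      also have "\<dots> \<le> c powr (2 + real n / 2)" using c by (intro powr_mono[OF ek]) simp
      also have "\<dots> = c powr 2 * c powr (real n / 2)" by (rule powr_add)
      also have "c powr 2 = c\<^sup>2" using c by (simp only: powr_numeral less_imp_le)
      finally show ?thesis .
    qed
    have "\<bar>f e\<bar> * \<bar>dinv f k\<bar> \<le> (A * c ^ e) * (A * c ^ k * real (bigOmega k) * X)"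
      using bound E(1) W by (intro mult_mono) auto
    also have "\<dots> = A * A * (c ^ e * c ^ k) * real (bigOmega k) * X" by (simp add: algebra_simps)
    also have "\<dots> \<le> A * A * (c\<^sup>2 * c powr (real n / 2)) * (real (bigOmega n) - 1) * X"
    proof -
      have h1: "A * A * (c ^ e * c ^ k) \<le> A * A * (c\<^sup>2 * c powr (real n / 2))"
        using cek A by (intro mult_left_mono) auto
      have h2: "real (bigOmega k) \<le> real (bigOmega n) - 1"
        using bigOmega_Ep[OF e] unfolding k_def .
      have h3: "0 \<le> A * A * (c\<^sup>2 * c powr (real n / 2))" using A c by simp
      have "A * A * (c ^ e * c ^ k) * real (bigOmega k) \<le> A * A * (c\<^sup>2 * c powr (real n / 2)) * (real (bigOmega n) - 1)"
        by (rule mult_mono[OF h1 h2 h3]) simp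
      thus ?thesis using X1 by (intro mult_right_mono) auto
    qed
    also have "\<dots> = Q * (1 / real e powr s)"
    proof -
      have "real n powr s = real e powr s * real k powr s"
        using k E(1) by (simp add: powr_mult)
      thus ?thesis using E(1) unfolding Q_def X_def by (simp add: field_simps)
    qed
    finally show ?thesis unfolding k_def .
  qed
  have "\<bar>dinv f n\<bar> \<le> \<bar>f n\<bar> + (\<Sum>e\<in>Ep n. \<bar>f e\<bar> * \<bar>dinv f (n div e)\<bar>)"
    by (rule dinv_bound[OF less.prems])
  also have "(\<Sum>e\<in>Ep n. \<bar>f e\<bar> * \<bar>dinv f (n div e)\<bar>) \<le> (\<Sum>e\<in>Ep n. Q * (1 / real e powr s))"
    by (intro sum_mono tm)
  also have "\<dots> = Q * (\<Sum>e\<in>Ep n. 1 / real e powr s)" by (simp add: sum_distrib_left)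
  also have "\<dots> \<le> Q * (zeta s - 1)"
    using Q0 s Ep_finite by (intro mult_left_mono sum_le_zeta) (auto dest: Ep_elem)
  also have "Q * (zeta s - 1) = (real (bigOmega n) - 1) * A * real n powr s / 2 powr s * c powr (real n / 2)"
    using A c unfolding Q_def s(2) by (simp add: field_simps)
  also have "\<bar>f n\<bar> \<le> A * c ^ n" using bound less.prems by auto
  finally show ?case by simp
qed

lemma bigOmega_le_n: "n > 0 \<Longrightarrow> real (bigOmega n) \<le> real n"
proof -
  assume n: "n > 0"
  have "bigOmega n < 2 ^ bigOmega n" by (rule less_exp)
  also have "\<dots> \<le> n" by (rule two_pow_bigOmega[OF n])
  finally show ?thesis by simp
qed

theorem proposition3p13:
  fixes f :: "nat \<Rightarrow> real" and A c :: real
  assumes f1: "f 1 = 1"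
    and A_pos: "A > 0" and c_pos: "c > 0"
    and bound: "\<forall>n\<ge>2. \<bar>f n\<bar> \<le> A * c ^ n"
  shows
   "(c < 1 \<longrightarrow>
      (\<exists>!s. s > 1 \<and> zeta s = 1 / A + 1) \<and>
      (\<forall>\<sigma>. \<sigma> > 1 \<and> zeta \<sigma> = 1 / A + 1 \<longrightarrow>
        (\<forall>n\<ge>2.
          \<bar>dirichlet_inverse f n\<bar>
            \<le> real (bigOmega n) * A * real n powr (\<sigma> + exp 1 * ln c) / 2 powr \<sigma> \<and>
          real (bigOmega n) * A * real n powr (\<sigma> + exp 1 * ln c) / 2 powr \<sigma>
            \<le> A * real n powr (\<sigma> + exp 1 * ln c) * ln (real n) / (2 powr \<sigma> * ln 2))))
    \<and>
    (c < 1 \<and> A \<le> 1 \<longrightarrow>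
      (\<exists>!s. s > 1 \<and> zeta s = 2) \<and>
      (\<forall>\<rho>. \<rho> > 1 \<and> zeta \<rho> = 2 \<longrightarrow>
        (\<forall>n\<ge>2. \<bar>dirichlet_inverse f n\<bar> \<le> real n powr (\<rho> + exp 1 * ln c))))
    \<and>
    (c > 1 \<longrightarrow>
      (\<exists>!s. s > 1 \<and> zeta s = 1 / (A * c\<^sup>2) + 1) \<and>
      (\<forall>\<upsilon>. \<upsilon> > 1 \<and> zeta \<upsilon> = 1 / (A * c\<^sup>2) + 1 \<longrightarrow>
        (\<exists>At>0. \<forall>n\<ge>2.
          \<bar>dirichlet_inverse f n\<bar>
            \<le> A * c ^ n + (real (bigOmega n) - 1) * A * real n powr \<upsilon> / 2 powr \<upsilon>
                 * c powr (real n / 2) \<and>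
          A * c ^ n + (real (bigOmega n) - 1) * A * real n powr \<upsilon> / 2 powr \<upsilon>
                 * c powr (real n / 2) \<le> At * c ^ n)))"
proof (intro conjI impI)
  have di: "dirichlet_inverse f = dinv f" by (rule di_eq[of f, OF f1])
  {
    assume c1: "c < 1"
    show "\<exists>!s. s > 1 \<and> zeta s = 1 / A + 1" using A_pos by (intro zeta_root) simp
    show "\<forall>\<sigma>. \<sigma> > 1 \<and> zeta \<sigma> = 1 / A + 1 \<longrightarrow>
        (\<forall>n\<ge>2.
          \<bar>dirichlet_inverse f n\<bar>
            \<le> real (bigOmega n) * A * real n powr (\<sigma> + exp 1 * ln c) / 2 powr \<sigma> \<and>
          real (bigOmega n) * A * real n powr (\<sigma> + exp 1 * ln c) / 2 powr \<sigma>
            \<le> A * real n powr (\<sigma> + exp 1 * ln c) * ln (real n) / (2 powr \<sigma> * ln 2))"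
    proof (intro impI allI conjI)
      fix \<sigma> :: real and n :: nat assume s: "\<sigma> > 1 \<and> zeta \<sigma> = 1 / A + 1" and n: "n \<ge> 2"
      show "\<bar>dirichlet_inverse f n\<bar> \<le> real (bigOmega n) * A * real n powr (\<sigma> + exp 1 * ln c) / 2 powr \<sigma>"
        unfolding di using part1[OF f1 A_pos c_pos c1 bound, of \<sigma> n] s n by auto
      have "real (bigOmega n) * (A * real n powr (\<sigma> + exp 1 * ln c) / 2 powr \<sigma>)
           \<le> ln (real n) / ln 2 * (A * real n powr (\<sigma> + exp 1 * ln c) / 2 powr \<sigma>)"
        using bigOmega_ln[of n] n A_pos by (intro mult_right_mono) auto
      thus "real (bigOmega n) * A * real n powr (\<sigma> + exp 1 * ln c) / 2 powr \<sigma>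
            \<le> A * real n powr (\<sigma> + exp 1 * ln c) * ln (real n) / (2 powr \<sigma> * ln 2)"
        by (simp add: field_simps)
    qed
  }
  {
    assume cA: "c < 1 \<and> A \<le> 1"
    show "\<exists>!s. s > 1 \<and> zeta s = 2" by (intro zeta_root) simp
    show "\<forall>\<rho>. \<rho> > 1 \<and> zeta \<rho> = 2 \<longrightarrow>
        (\<forall>n\<ge>2. \<bar>dirichlet_inverse f n\<bar> \<le> real n powr (\<rho> + exp 1 * ln c))"
      unfolding di using part2[OF f1 A_pos _ c_pos _ bound] cA by auto
  }
  {
    assume c1: "c > 1"
    have Ac: "A * c\<^sup>2 > 0" using A_pos c1 by simp
    show "\<exists>!s. s > 1 \<and> zeta s = 1 / (A * c\<^sup>2) + 1" using Ac by (intro zeta_root) simp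
    show "\<forall>u. u > 1 \<and> zeta u = 1 / (A * c\<^sup>2) + 1 \<longrightarrow>
        (\<exists>At>0. \<forall>n\<ge>2.
          \<bar>dirichlet_inverse f n\<bar>
            \<le> A * c ^ n + (real (bigOmega n) - 1) * A * real n powr u / 2 powr u
                 * c powr (real n / 2) \<and>
          A * c ^ n + (real (bigOmega n) - 1) * A * real n powr u / 2 powr u
                 * c powr (real n / 2) \<le> At * c ^ n)"
    proof (intro allI impI)
      fix u :: real
      assume s: "u > 1 \<and> zeta u = 1 / (A * c\<^sup>2) + 1"
      have "(\<lambda>n::nat. real n powr (u+1) / c powr (real n / 2)) \<longlonglongrightarrow> 0"
        using c1 by real_asymp
      hence "Bseq (\<lambda>n::nat. real n powr (u+1) / c powr (real n / 2))" by (intro convergent_imp_Bseq convergentI)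
      then obtain K where K: "K > 0" "\<And>n. norm (real n powr (u+1) / c powr (real n / 2)) \<le> K"
        using BseqE by blast
      define At where "At = A + A / 2 powr u * K"
      have At: "At > 0" unfolding At_def using A_pos K(1) by (simp add: add_pos_nonneg)
      show "\<exists>At>0. \<forall>n\<ge>2.
          \<bar>dirichlet_inverse f n\<bar>
            \<le> A * c ^ n + (real (bigOmega n) - 1) * A * real n powr u / 2 powr u
                 * c powr (real n / 2) \<and>
          A * c ^ n + (real (bigOmega n) - 1) * A * real n powr u / 2 powr u
                 * c powr (real n / 2) \<le> At * c ^ n"
      proof (intro exI[of _ At] conjI allI impI At)
        fix n :: nat assume n: "n \<ge> 2"
        show "\<bar>dirichlet_inverse f n\<bar>
            \<le> A * c ^ n + (real (bigOmega n) - 1) * A * real n powr u / 2 powr u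
                 * c powr (real n / 2)"
          unfolding di using part3[OF f1 A_pos c1 bound, of u n] s n by auto
        have cp: "c powr (real n / 2) > 0" using c1 by simp
        have Kn: "real n powr (u+1) \<le> K * c powr (real n / 2)"
          using K(2)[of n] cp by (simp add: field_simps)
        have cn: "c ^ n = c powr (real n / 2) * c powr (real n / 2)"
          using c1 by (simp add: powr_add[symmetric] powr_realpow)
        have "(real (bigOmega n) - 1) * A * real n powr u / 2 powr u * c powr (real n / 2)
              \<le> real n * A * real n powr u / 2 powr u * c powr (real n / 2)"
          using bigOmega_le_n[of n] n A_pos cp by (intro mult_right_mono divide_right_mono) auto
        also have "\<dots> = A / 2 powr u * real n powr (u+1) * c powr (real n / 2)"
          using n by (simp add: powr_add field_simps)
        also have "\<dots> \<le> A / 2 powr u * (K * c powr (real n / 2)) * c powr (real n / 2)"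
          using Kn A_pos cp by (intro mult_right_mono mult_left_mono) auto
        also have "\<dots> = A / 2 powr u * K * c ^ n" unfolding cn by simp
        finally show "A * c ^ n + (real (bigOmega n) - 1) * A * real n powr u / 2 powr u
                 * c powr (real n / 2) \<le> At * c ^ n" unfolding At_def by (simp add: algebra_simps)
      qed
    qed
  }
qed

end
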